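(* Let $n\ge 2$ and let $l$ be the correspondence defined on $\mathcal S_{\neq}$ by $l(S)=so(n)\setminus\mathcal L_{\mathrm{invar}}(o_1,\dots,o_n)$, where $o_1,\dots,o_n$ is an orthonormal basis of eigenvectors of $S$ (this is independent of the choice of such basis). Then $$\mathrm{Graph}(l)=\{(S,L):S\in\mathcal S_{\neq},\ L\in l(S)\}$$ is open and dense in $\mathcal S(n,\mathbb R)\times so(n)$ (product topology, each factor with the relative norm topology).
   Context: $\mathcal S(n,\mathbb R)$ denotes the real symmetric $n\times n$ matrices and $\mathcal S_{\neq}\subseteq\mathcal S(n,\mathbb R)$ those whose $n$ eigenvalues are pairwise distinct. $so(n)$ denotes the real skew-symmetric $n\times n$ matrices. For an orthonormal basis $o_1,\dots,o_n$ of $\mathbb R^n$, $\mathcal L_{\mathrm{invar}}(o_1,\dots,o_n)$ is the set of $L\in so(n)$ for which there exists a subset $\{o_{j_1},\dots,o_{j_k}\}$ with $1\le k<n$ such that $\mathrm{span}_{\mathbb R}\{o_{j_1},\dots,o_{j_k}\}$ is an invariant subspace of $L$. *)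

theory Defs
  imports "HOL-Analysis.Analysis"
begin

definition sym_mats :: "(real^'n^'n) set" where
  "sym_mats = {S. transpose S = S}"

definition skew_mats :: "(real^'n^'n) set" where
  "skew_mats = {L. transpose L = - L}"

definition eigenvalues :: "real^'n^'n \<Rightarrow> real set" where
  "eigenvalues S = {c. \<exists>v. v \<noteq> 0 \<and> S *v v = c *\<^sub>R v}"

definition sym_distinct :: "(real^'n^'n) set" where
  "sym_distinct = {S \<in> sym_mats. card (eigenvalues S) = CARD('n)}"

definition orthonormal_basis :: "('n \<Rightarrow> real^'n) \<Rightarrow> bool" where
  "orthonormal_basis ob \<longleftrightarrow> (\<forall>i j. ob i \<bullet> ob j = (if i = j then 1 else 0))"

definition eigenbasis :: "real^'n^'n \<Rightarrow> ('n \<Rightarrow> real^'n) \<Rightarrow> bool" where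
  "eigenbasis S ob \<longleftrightarrow> orthonormal_basis ob \<and> (\<forall>i. \<exists>c. S *v ob i = c *\<^sub>R ob i)"

definition L_invar :: "('n \<Rightarrow> real^'n) \<Rightarrow> (real^'n^'n) set" where
  "L_invar ob = {L \<in> skew_mats. \<exists>J::'n set. 1 \<le> card J \<and> card J < CARD('n) \<and>
       (\<forall>x \<in> span (ob ` J). L *v x \<in> span (ob ` J))}"

definition graph_l :: "((real^'n^'n) \<times> (real^'n^'n)) set" where
  "graph_l = {(S, L). S \<in> sym_distinct \<and>
       (\<exists>ob. eigenbasis S ob \<and> L \<in> skew_mats - L_invar ob)}"

end

theory Submission
  imports Defs
begin


lemma sym_inner:
  fixes S :: "real^'n^'n"
  assumes "transpose S = S" shows "(S *v x) \<bullet> y = x \<bullet> (S *v y)"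
proof -
  have "S *v x = x v* transpose S" by simp
  also have "\<dots> = x v* S" using assms by simp
  finally show ?thesis by (simp add: dot_lmul_matrix)
qed

lemma skew_inner:
  fixes L :: "real^'n^'n"
  assumes "transpose L = - L" shows "(L *v x) \<bullet> y = - (x \<bullet> (L *v y))"
proof -
  have "L *v x = x v* transpose L" by simp
  also have "\<dots> = x v* (- L)" using assms by simp
  also have "\<dots> = - (x v* L)" by (simp add: vector_matrix_mult_def vec_eq_iff sum_negf)
  finally show ?thesis by (simp add: dot_lmul_matrix)
qed

lemma onb_inj:
  assumes "orthonormal_basis ob" shows "inj ob"
proof
  fix i j assume "ob i = ob j"
  then have "ob i \<bullet> ob j = ob i \<bullet> ob i" by simp
  then show "i = j" using assms unfolding orthonormal_basis_def by (metis zero_neq_one)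
qed

lemma onb_span:
  fixes ob :: "'n \<Rightarrow> real^'n"
  assumes "orthonormal_basis ob" shows "span (range ob) = UNIV"
proof -
  have o: "\<And>i j. ob i \<bullet> ob j = (if i = j then 1 else 0)" using assms unfolding orthonormal_basis_def by blast
  have "pairwise orthogonal (range ob)"
    unfolding pairwise_def orthogonal_def using o by auto
  moreover have "0 \<notin> range ob" using o by (metis imageE inner_zero_left zero_neq_one)
  ultimately have ind: "independent (range ob)" by (rule pairwise_orthogonal_independent)
  have "card (range ob) = CARD('n)" using onb_inj[OF assms] by (simp add: card_image)
  also have "\<dots> = dim (UNIV :: (real^'n) set)" by simp
  finally have "UNIV \<subseteq> span (range ob)"
    using card_eq_dim[of "range ob" UNIV] ind by auto
  then show ?thesis by auto
qed

lemma onb_expand: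
  fixes ob :: "'n \<Rightarrow> real^'n"
  assumes "orthonormal_basis ob" shows "x = (\<Sum>i\<in>UNIV. (ob i \<bullet> x) *\<^sub>R ob i)"
proof -
  have o: "\<And>i j. ob i \<bullet> ob j = (if i = j then 1 else 0)" using assms unfolding orthonormal_basis_def by blast
  define y where "y = x - (\<Sum>i\<in>UNIV. (ob i \<bullet> x) *\<^sub>R ob i)"
  have "ob j \<bullet> y = 0" for j
  proof -
    have "ob j \<bullet> (\<Sum>i\<in>UNIV. (ob i \<bullet> x) *\<^sub>R ob i) = (\<Sum>i\<in>UNIV. (ob i \<bullet> x) * (ob j \<bullet> ob i))"
      by (simp add: inner_sum_right)
    also have "\<dots> = (\<Sum>i\<in>UNIV. if i = j then ob i \<bullet> x else 0)"
      by (rule sum.cong) (auto simp: o)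
    also have "\<dots> = ob j \<bullet> x" by simp
    finally show ?thesis unfolding y_def by (simp add: inner_diff_right)
  qed
  then have "orthogonal y a" if "a \<in> span (range ob)" for a
    using orthogonal_to_span[OF that, of y] \<open>\<And>j. ob j \<bullet> y = 0\<close> unfolding orthogonal_def
    by (metis imageE inner_commute)
  then have "orthogonal y y" using onb_span[OF assms] by auto
  then have "y = 0" by (simp add: orthogonal_def)
  then show ?thesis unfolding y_def by simp
qed

lemma onb_span_iff:
  fixes ob :: "'n \<Rightarrow> real^'n"
  assumes "orthonormal_basis ob" shows "x \<in> span (ob ` J) \<longleftrightarrow> (\<forall>k. k \<notin> J \<longrightarrow> ob k \<bullet> x = 0)"
proof
  have o: "\<And>i j. ob i \<bullet> ob j = (if i = j then 1 else 0)" using assms unfolding orthonormal_basis_def by blast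
  assume x: "x \<in> span (ob ` J)"
  show "\<forall>k. k \<notin> J \<longrightarrow> ob k \<bullet> x = 0"
  proof (intro allI impI)
    fix k assume "k \<notin> J"
    then have "orthogonal (ob k) y" if "y \<in> ob ` J" for y using that o by (auto simp: orthogonal_def)
    then show "ob k \<bullet> x = 0" using orthogonal_to_span[OF x] by (auto simp: orthogonal_def)
  qed
next
  assume h: "\<forall>k. k \<notin> J \<longrightarrow> ob k \<bullet> x = 0"
  have "x = (\<Sum>i\<in>UNIV. (ob i \<bullet> x) *\<^sub>R ob i)" by (rule onb_expand[OF assms])
  also have "\<dots> \<in> span (ob ` J)"
  proof (rule span_sum)
    fix i show "(ob i \<bullet> x) *\<^sub>R ob i \<in> span (ob ` J)"
      using h by (cases "i \<in> J") (auto intro: span_mul span_base span_zero)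
  qed
  finally show "x \<in> span (ob ` J)" .
qed

lemma onb_invar_iff:
  fixes ob :: "'n \<Rightarrow> real^'n" and L :: "real^'n^'n"
  assumes "orthonormal_basis ob"
  shows "(\<forall>x\<in>span (ob ` J). L *v x \<in> span (ob ` J)) \<longleftrightarrow> (\<forall>j\<in>J. \<forall>k. k \<notin> J \<longrightarrow> ob k \<bullet> (L *v ob j) = 0)"
proof
  assume "\<forall>x\<in>span (ob ` J). L *v x \<in> span (ob ` J)"
  then show "\<forall>j\<in>J. \<forall>k. k \<notin> J \<longrightarrow> ob k \<bullet> (L *v ob j) = 0"
    using onb_span_iff[OF assms] by (meson imageI span_base)
next
  assume h: "\<forall>j\<in>J. \<forall>k. k \<notin> J \<longrightarrow> ob k \<bullet> (L *v ob j) = 0"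
  show "\<forall>x\<in>span (ob ` J). L *v x \<in> span (ob ` J)"
  proof
    fix x assume x: "x \<in> span (ob ` J)"
    have xz: "\<And>i. i \<notin> J \<Longrightarrow> ob i \<bullet> x = 0" using x onb_span_iff[OF assms] by blast
    have "L *v x = L *v (\<Sum>i\<in>UNIV. (ob i \<bullet> x) *\<^sub>R ob i)" using onb_expand[OF assms] by metis
    also have "\<dots> = (\<Sum>i\<in>UNIV. (ob i \<bullet> x) *\<^sub>R (L *v ob i))"
      by (simp add: linear_sum[OF matrix_vector_mul_linear] linear_scale[OF matrix_vector_mul_linear])
    finally have Lx: "L *v x = (\<Sum>i\<in>UNIV. (ob i \<bullet> x) *\<^sub>R (L *v ob i))" .
    have "ob k \<bullet> (L *v x) = 0" if "k \<notin> J" for k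
    proof -
      have "ob k \<bullet> (L *v x) = (\<Sum>i\<in>UNIV. (ob i \<bullet> x) * (ob k \<bullet> (L *v ob i)))"
        unfolding Lx by (simp add: inner_sum_right)
      also have "\<dots> = 0" using xz h that by (intro sum.neutral) auto
      finally show ?thesis .
    qed
    then show "L *v x \<in> span (ob ` J)" using onb_span_iff[OF assms] by blast
  qed
qed

lemma L_invar_iff:
  fixes ob :: "'n \<Rightarrow> real^'n" and L :: "real^'n^'n"
  assumes "orthonormal_basis ob"
  shows "L \<in> L_invar ob \<longleftrightarrow> L \<in> skew_mats \<and> (\<exists>J::'n set. 1 \<le> card J \<and> card J < CARD('n) \<and>
     (\<forall>j\<in>J. \<forall>k. k \<notin> J \<longrightarrow> ob k \<bullet> (L *v ob j) = 0))"
  unfolding L_invar_def using onb_invar_iff[OF assms] by blast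

lemma eigenbasis_eq:
  assumes "eigenbasis S ob" shows "S *v ob i = (ob i \<bullet> (S *v ob i)) *\<^sub>R ob i"
proof -
  obtain c where c: "S *v ob i = c *\<^sub>R ob i" using assms unfolding eigenbasis_def by blast
  have "ob i \<bullet> ob i = 1" using assms unfolding eigenbasis_def orthonormal_basis_def by auto
  then have "ob i \<bullet> (S *v ob i) = c" by (simp add: c)
  then show ?thesis using c by simp
qed



lemma eigvals_range:
  fixes S :: "real^'n^'n"
  assumes S: "transpose S = S" and ob: "orthonormal_basis ob" and c: "\<And>i. S *v ob i = c i *\<^sub>R ob i"
  shows "eigenvalues S = range c"
proof
  have o: "\<And>i j. ob i \<bullet> ob j = (if i = j then 1 else 0)" using ob unfolding orthonormal_basis_def by blast
  show "range c \<subseteq> eigenvalues S"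
  proof
    fix m assume "m \<in> range c" then obtain i where "m = c i" by auto
    moreover have "ob i \<noteq> 0" using o[of i i] by auto
    ultimately show "m \<in> eigenvalues S" unfolding eigenvalues_def using c by blast
  qed
  show "eigenvalues S \<subseteq> range c"
  proof
    fix m assume "m \<in> eigenvalues S"
    then obtain v where v: "v \<noteq> 0" "S *v v = m *\<^sub>R v" unfolding eigenvalues_def by blast
    obtain i where i: "ob i \<bullet> v \<noteq> 0"
    proof (rule ccontr)
      assume "\<not> thesis" then have "\<forall>i. ob i \<bullet> v = 0" using that by blast
      then have "v = 0" using onb_expand[OF ob, of v] by simp
      then show False using v by simp
    qed
    have "ob i \<bullet> (S *v v) = (S *v ob i) \<bullet> v" using sym_inner[OF S] by simp
    then have "m * (ob i \<bullet> v) = c i * (ob i \<bullet> v)" using v c by simp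
    then have "m = c i" using i by simp
    then show "m \<in> range c" by simp
  qed
qed

lemma distinct_iff_inj:
  fixes S :: "real^'n^'n"
  assumes S: "transpose S = S" and ob: "orthonormal_basis ob" and c: "\<And>i. S *v ob i = c i *\<^sub>R ob i"
  shows "S \<in> sym_distinct \<longleftrightarrow> inj c"
proof -
  have "S \<in> sym_distinct \<longleftrightarrow> card (range c) = CARD('n)"
    unfolding sym_distinct_def sym_mats_def using S eigvals_range[OF S ob c] by simp
  also have "\<dots> \<longleftrightarrow> inj c" using inj_on_iff_eq_card[of UNIV c] by simp
  finally show ?thesis .
qed

lemma transfer_invar:
  fixes S :: "real^'n^'n"
  assumes Sd: "S \<in> sym_distinct" and eo: "eigenbasis S p" and eb: "eigenbasis S ob"
    and Lo: "L \<in> L_invar p"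
  shows "L \<in> L_invar ob"
proof -
  have S: "transpose S = S" using Sd unfolding sym_distinct_def sym_mats_def by auto
  have oo: "orthonormal_basis p" and ob: "orthonormal_basis ob" using eo eb unfolding eigenbasis_def by auto
  have o1: "\<And>i j. p i \<bullet> p j = (if i = j then 1 else 0)" using oo unfolding orthonormal_basis_def by blast
  have o2: "\<And>i j. ob i \<bullet> ob j = (if i = j then 1 else 0)" using ob unfolding orthonormal_basis_def by blast
  define c where "c i = ob i \<bullet> (S *v ob i)" for i
  define mu where "mu i = p i \<bullet> (S *v p i)" for i
  have c: "\<And>i. S *v ob i = c i *\<^sub>R ob i" unfolding c_def using eigenbasis_eq[OF eb] by blast
  have mu: "\<And>i. S *v p i = mu i *\<^sub>R p i" unfolding mu_def using eigenbasis_eq[OF eo] by blast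
  have injc: "inj c" using distinct_iff_inj[OF S ob c] Sd by simp
  have "mu i \<in> range c" for i
    using eigvals_range[OF S ob c] eigvals_range[OF S oo mu] by auto
  then have "\<forall>i. \<exists>k. mu i = c k" by blast
  then obtain \<sigma> where sig: "\<And>i. mu i = c (\<sigma> i)" by metis
  define b where "b i = ob (\<sigma> i) \<bullet> p i" for i
  have zero: "ob k \<bullet> p i = 0" if "k \<noteq> \<sigma> i" for k i
  proof -
    have "ob k \<bullet> (S *v p i) = (S *v ob k) \<bullet> p i" using sym_inner[OF S] by simp
    then have "mu i * (ob k \<bullet> p i) = c k * (ob k \<bullet> p i)" using mu c by simp
    moreover have "c k \<noteq> mu i" using injc that sig by (metis injD)
    ultimately show ?thesis by simp
  qed
  have ob_eq: "p i = b i *\<^sub>R ob (\<sigma> i)" for i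
  proof -
    have "p i = (\<Sum>k\<in>UNIV. (ob k \<bullet> p i) *\<^sub>R ob k)" by (rule onb_expand[OF ob])
    also have "\<dots> = (\<Sum>k\<in>UNIV. if k = \<sigma> i then (ob k \<bullet> p i) *\<^sub>R ob k else 0)"
      by (rule sum.cong) (auto simp: zero)
    also have "\<dots> = b i *\<^sub>R ob (\<sigma> i)" by (simp add: b_def)
    finally show ?thesis .
  qed
  have bsq: "b i * b i = 1" for i
  proof -
    have "p i \<bullet> p i = b i * b i * (ob (\<sigma> i) \<bullet> ob (\<sigma> i))"
      by (subst (1 2) ob_eq) simp
    then show ?thesis using o1 o2 by simp
  qed
  have ob_eq2: "ob (\<sigma> i) = b i *\<^sub>R p i" for i
    using ob_eq[of i] bsq[of i] by (simp add: scaleR_scaleR)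
  have injs: "inj \<sigma>"
  proof
    fix i j assume "\<sigma> i = \<sigma> j"
    then have "p i \<bullet> p j = b i * b j" using ob_eq[of i] ob_eq[of j] o2 by simp
    moreover have "b i * b j \<noteq> 0" using bsq by (metis mult_eq_0_iff zero_neq_one)
    ultimately show "i = j" using o1 by (metis)
  qed
  then have surjs: "surj \<sigma>" using finite_UNIV_inj_surj[of \<sigma>] by simp
  obtain J where L: "L \<in> skew_mats" and J: "1 \<le> card J" "card J < CARD('n)"
      and Jc: "\<forall>j\<in>J. \<forall>k. k \<notin> J \<longrightarrow> p k \<bullet> (L *v p j) = 0"
    using Lo L_invar_iff[OF oo] by blast
  have "card (\<sigma> ` J) = card J" using injs by (simp add: card_image inj_on_subset)
  moreover have "\<forall>j'\<in>\<sigma> ` J. \<forall>k'. k' \<notin> \<sigma> ` J \<longrightarrow> ob k' \<bullet> (L *v ob j') = 0"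
  proof (intro ballI allI impI)
    fix j' k' assume j': "j' \<in> \<sigma> ` J" and k': "k' \<notin> \<sigma> ` J"
    obtain j where j: "j \<in> J" "j' = \<sigma> j" using j' by auto
    obtain k where k: "k' = \<sigma> k" using surjs by (metis surjD)
    have kJ: "k \<notin> J" using k k' by auto
    have "ob k' \<bullet> (L *v ob j') = (b k * b j) * (p k \<bullet> (L *v p j))"
      unfolding j(2) k ob_eq2 by (simp add: matrix_vector_mult_scaleR)
    also have "\<dots> = 0" using Jc j(1) kJ by simp
    finally show "ob k' \<bullet> (L *v ob j') = 0" .
  qed
  ultimately show ?thesis using L J L_invar_iff[OF ob] by metis
qed



lemma quad_arg:
  fixes g h :: real
  assumes "\<And>t. 2*t*g + t\<^sup>2*h \<le> 0" shows "g = 0"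
proof (rule ccontr)
  assume g: "g \<noteq> 0"
  define a where "a = \<bar>h\<bar> + 1"
  have a: "a > 0" "2*a + h > 0" unfolding a_def by auto
  have "2*(g/a)*g + (g/a)\<^sup>2*h \<le> 0" using assms .
  then have "g\<^sup>2 * (2*a + h) / a\<^sup>2 \<le> 0" using a by (simp add: field_simps power2_eq_square)
  moreover have "g\<^sup>2 * (2*a + h) / a\<^sup>2 > 0" using a g by simp
  ultimately show False by simp
qed

lemma spectral_step:
  fixes S :: "real^'n^'n" and U :: "(real^'n) set"
  assumes S: "transpose S = S" and fin: "finite U" and cU: "card U < CARD('n)"
    and orth: "\<And>u w. u \<in> U \<Longrightarrow> w \<in> U \<Longrightarrow> u \<bullet> w = (if u = w then 1 else 0)"
    and eig: "\<And>u. u \<in> U \<Longrightarrow> \<exists>c. S *v u = c *\<^sub>R u"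
  shows "\<exists>v. v \<notin> U \<and> v \<bullet> v = 1 \<and> (\<forall>u\<in>U. u \<bullet> v = 0) \<and> (\<exists>c. S *v v = c *\<^sub>R v)"
proof -
  define W where "W = {x. \<forall>u\<in>U. u \<bullet> x = 0}"
  define q where "q x = x \<bullet> (S *v x)" for x
  have "dim U < DIM(real^'n)" using dim_le_card'[OF fin] cU by simp
  then obtain x0 where x0: "x0 \<noteq> 0" "\<And>y. y \<in> span U \<Longrightarrow> orthogonal x0 y"
    using orthogonal_to_subspace_exists by blast
  have x0W: "x0 \<in> W" using x0(2) unfolding W_def orthogonal_def by (auto intro: span_base simp: inner_commute)
  have Wsc: "x \<in> W \<Longrightarrow> r *\<^sub>R x \<in> W" for x r unfolding W_def by auto
  have Wadd: "x \<in> W \<Longrightarrow> y \<in> W \<Longrightarrow> x + y \<in> W" for x y unfolding W_def by (auto simp: inner_add_right)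
  have Wdiff: "x \<in> W \<Longrightarrow> y \<in> W \<Longrightarrow> x - y \<in> W" for x y unfolding W_def by (auto simp: inner_diff_right)
  have SW: "x \<in> W \<Longrightarrow> S *v x \<in> W" for x
  proof -
    assume x: "x \<in> W"
    have "u \<bullet> (S *v x) = 0" if uU: "u \<in> U" for u
    proof -
      obtain c where c: "S *v u = c *\<^sub>R u" using eig[OF uU] by blast
      have "u \<bullet> (S *v x) = (S *v u) \<bullet> x" using sym_inner[OF S] by simp
      also have "\<dots> = 0" using c x uU unfolding W_def by simp
      finally show ?thesis .
    qed
    then show ?thesis unfolding W_def by blast
  qed
  define K where "K = sphere 0 1 \<inter> W"
  have "closed W" unfolding W_def
  proof -
    have "{x. \<forall>u\<in>U. u \<bullet> x = 0} = (\<Inter>u\<in>U. {x. u \<bullet> x = 0})" by auto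
    then show "closed {x. \<forall>u\<in>U. u \<bullet> x = 0}" by (auto intro!: closed_INT closed_hyperplane)
  qed
  then have "compact K" unfolding K_def by (intro compact_Int_closed compact_sphere)
  moreover have "K \<noteq> {}"
  proof -
    have "(1/norm x0) *\<^sub>R x0 \<in> K" unfolding K_def using x0 x0W Wsc by auto
    then show ?thesis by blast
  qed
  moreover have "continuous_on K q" unfolding q_def
    by (intro continuous_intros matrix_vector_mult_linear_continuous_on)
  ultimately obtain v where vK: "v \<in> K" and vmax: "\<And>y. y \<in> K \<Longrightarrow> q y \<le> q v"
    using continuous_attains_sup[of K q] by blast
  define lam where "lam = q v"
  have vW: "v \<in> W" and vn: "norm v = 1" using vK unfolding K_def by auto
  have vv: "v \<bullet> v = 1" using vn by (simp add: norm_eq_1)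
  have bound: "q x \<le> lam * (x \<bullet> x)" if x: "x \<in> W" for x
  proof (cases "x = 0")
    case True then show ?thesis by (simp add: q_def)
  next
    case False
    have "(1/norm x) *\<^sub>R x \<in> K" unfolding K_def using False x Wsc by auto
    then have "q ((1/norm x) *\<^sub>R x) \<le> lam" using vmax lam_def by blast
    moreover have "q ((1/norm x) *\<^sub>R x) = q x / (norm x)\<^sup>2"
      by (simp add: q_def matrix_vector_mult_scaleR power2_eq_square)
    moreover have "x \<bullet> x = (norm x)\<^sup>2" by (simp add: power2_norm_eq_inner)
    ultimately show ?thesis using False by (simp add: field_simps)
  qed
  have key: "w \<bullet> (S *v v - lam *\<^sub>R v) = 0" if w: "w \<in> W" for w
  proof -
    define g where "g = w \<bullet> (S *v v - lam *\<^sub>R v)"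
    define h where "h = q w - lam * (w \<bullet> w)"
    have "2*t*g + t\<^sup>2*h \<le> 0" for t
    proof -
      have "v + t *\<^sub>R w \<in> W" using vW w Wsc Wadd by blast
      then have b: "q (v + t *\<^sub>R w) \<le> lam * ((v + t *\<^sub>R w) \<bullet> (v + t *\<^sub>R w))" by (rule bound)
      have sv: "v \<bullet> (S *v w) = w \<bullet> (S *v v)" using sym_inner[OF S, of v w] by (simp add: inner_commute)
      have "q (v + t *\<^sub>R w) = q v + 2*t*(w \<bullet> (S *v v)) + t\<^sup>2 * q w"
        unfolding q_def by (simp add: matrix_vector_right_distrib matrix_vector_mult_scaleR
            inner_add_left inner_add_right sv power2_eq_square algebra_simps)
      moreover have "(v + t *\<^sub>R w) \<bullet> (v + t *\<^sub>R w) = 1 + 2*t*(v \<bullet> w) + t\<^sup>2 * (w \<bullet> w)"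
        using vv by (simp add: inner_add_left inner_add_right inner_commute power2_eq_square algebra_simps)
      ultimately have b2: "q v + 2*t*(w \<bullet> (S *v v)) + t\<^sup>2 * q w \<le> lam * (1 + 2*t*(v \<bullet> w) + t\<^sup>2 * (w \<bullet> w))"
        using b by simp
      have "2*t*g + t\<^sup>2*h = (q v + 2*t*(w \<bullet> (S *v v)) + t\<^sup>2 * q w) - lam * (1 + 2*t*(v \<bullet> w) + t\<^sup>2 * (w \<bullet> w))"
        unfolding g_def h_def lam_def by (simp add: inner_diff_right inner_commute algebra_simps)
      then show ?thesis using b2 by linarith
    qed
    then show ?thesis using quad_arg g_def by blast
  qed
  have "S *v v - lam *\<^sub>R v \<in> W" using SW vW Wsc Wdiff by blast
  then have "(S *v v - lam *\<^sub>R v) \<bullet> (S *v v - lam *\<^sub>R v) = 0" using key by blast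
  then have eigv: "S *v v = lam *\<^sub>R v" by simp
  have "v \<notin> U"
  proof
    assume "v \<in> U" then have "v \<bullet> v = 0" using vW unfolding W_def by blast
    then show False using vv by simp
  qed
  then show ?thesis using vv vW eigv unfolding W_def by blast
qed

lemma spectral_k:
  fixes S :: "real^'n^'n"
  assumes S: "transpose S = S"
  shows "k \<le> CARD('n) \<Longrightarrow> \<exists>U. finite U \<and> card U = k \<and>
     (\<forall>u\<in>U. \<forall>w\<in>U. u \<bullet> w = (if u = w then 1 else 0)) \<and> (\<forall>u\<in>U. \<exists>c. S *v u = c *\<^sub>R u)"
proof (induction k)
  case 0 then show ?case by (intro exI[of _ "{}"]) auto
next
  case (Suc k)
  then obtain U where U: "finite U" "card U = k" "\<forall>u\<in>U. \<forall>w\<in>U. u \<bullet> w = (if u = w then 1 else 0)"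
    "\<forall>u\<in>U. \<exists>c. S *v u = c *\<^sub>R u" by auto
  obtain v where v: "v \<notin> U" "v \<bullet> v = 1" "\<forall>u\<in>U. u \<bullet> v = 0" "\<exists>c. S *v v = c *\<^sub>R v"
    using spectral_step[OF S U(1)] U Suc.prems by auto
  show ?case
  proof (intro exI[of _ "insert v U"] conjI)
    show "card (insert v U) = Suc k" using U v by simp
    show "\<forall>u\<in>insert v U. \<forall>w\<in>insert v U. u \<bullet> w = (if u = w then 1 else 0)"
      using U(3) v by (auto simp: inner_commute)
  qed (use U v in auto)
qed

lemma spectral:
  fixes S :: "real^'n^'n"
  assumes S: "transpose S = S"
  shows "\<exists>ob. eigenbasis S ob"
proof -
  obtain U where U: "finite U" "card U = CARD('n)" "\<forall>u\<in>U. \<forall>w\<in>U. u \<bullet> w = (if u = w then 1 else 0)"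
    "\<forall>u\<in>U. \<exists>c. S *v u = c *\<^sub>R u" using spectral_k[OF S, of "CARD('n)"] by auto
  have "card (UNIV::'n set) = card U" using U by simp
  then obtain f where f: "bij_betw f (UNIV::'n set) U"
    using finite_same_card_bij[of "UNIV::'n set" U] U(1) by auto
  have fU: "f i \<in> U" for i using f bij_betwE by blast
  have finj: "f i = f j \<longleftrightarrow> i = j" for i j using f by (auto simp: bij_betw_def inj_on_def)
  have "eigenbasis S f" unfolding eigenbasis_def orthonormal_basis_def
    using U(3,4) fU finj by metis
  then show ?thesis by blast
qed



definition matof :: "('n \<Rightarrow> real^'n) \<Rightarrow> ('n \<Rightarrow> 'n \<Rightarrow> real) \<Rightarrow> real^'n^'n" where
  "matof ob W = (\<chi> a b. \<Sum>j\<in>UNIV. \<Sum>k\<in>UNIV. W j k * (ob k $ a) * (ob j $ b))"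

lemma matof_mult: "matof ob W *v x = (\<Sum>j\<in>UNIV. \<Sum>k\<in>UNIV. (W j k * (ob j \<bullet> x)) *\<^sub>R ob k)"
proof -
  have "(matof ob W *v x) $ a = (\<Sum>j\<in>UNIV. \<Sum>k\<in>UNIV. (W j k * (ob j \<bullet> x)) *\<^sub>R ob k) $ a" for a
  proof -
    have "(matof ob W *v x) $ a = (\<Sum>b\<in>UNIV. (\<Sum>j\<in>UNIV. \<Sum>k\<in>UNIV. W j k * (ob k $ a) * (ob j $ b)) * x $ b)"
      by (simp add: matof_def matrix_vector_mult_def)
    also have "\<dots> = (\<Sum>b\<in>UNIV. \<Sum>j\<in>UNIV. \<Sum>k\<in>UNIV. W j k * (ob k $ a) * (ob j $ b) * x $ b)"
      by (simp add: sum_distrib_right)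
    also have "\<dots> = (\<Sum>j\<in>UNIV. \<Sum>b\<in>UNIV. \<Sum>k\<in>UNIV. W j k * (ob k $ a) * (ob j $ b) * x $ b)"
      by (rule sum.swap)
    also have "\<dots> = (\<Sum>j\<in>UNIV. \<Sum>k\<in>UNIV. \<Sum>b\<in>UNIV. W j k * (ob k $ a) * (ob j $ b) * x $ b)"
      by (rule sum.cong[OF refl], rule sum.swap)
    also have "\<dots> = (\<Sum>j\<in>UNIV. \<Sum>k\<in>UNIV. W j k * (ob j \<bullet> x) * ob k $ a)"
      by (simp add: inner_vec_def sum_distrib_left sum_distrib_right algebra_simps)
    also have "\<dots> = (\<Sum>j\<in>UNIV. \<Sum>k\<in>UNIV. (W j k * (ob j \<bullet> x)) *\<^sub>R ob k) $ a"
      by (simp add: sum_component)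
    finally show ?thesis .
  qed
  then show ?thesis by (simp add: vec_eq_iff)
qed

lemma matof_basis:
  assumes ob: "orthonormal_basis ob"
  shows "matof ob W *v ob j = (\<Sum>k\<in>UNIV. W j k *\<^sub>R ob k)"
    and "ob k \<bullet> (matof ob W *v ob j) = W j k"
proof -
  have o: "\<And>i j. ob i \<bullet> ob j = (if i = j then 1 else 0)" using ob unfolding orthonormal_basis_def by blast
  have "matof ob W *v ob j = (\<Sum>i\<in>UNIV. \<Sum>k\<in>UNIV. (W i k * (ob i \<bullet> ob j)) *\<^sub>R ob k)"
    by (rule matof_mult)
  also have "\<dots> = (\<Sum>i\<in>UNIV. if i = j then (\<Sum>k\<in>UNIV. W j k *\<^sub>R ob k) else 0)"
    by (rule sum.cong) (auto simp: o)
  also have "\<dots> = (\<Sum>k\<in>UNIV. W j k *\<^sub>R ob k)" by simp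
  finally show 1: "matof ob W *v ob j = (\<Sum>k\<in>UNIV. W j k *\<^sub>R ob k)" .
  have "ob k \<bullet> (\<Sum>i\<in>UNIV. W j i *\<^sub>R ob i) = (\<Sum>i\<in>UNIV. W j i * (ob k \<bullet> ob i))"
    by (simp add: inner_sum_right)
  also have "\<dots> = (\<Sum>i\<in>UNIV. if i = k then W j k else 0)"
    by (rule sum.cong) (auto simp: o)
  finally show "ob k \<bullet> (matof ob W *v ob j) = W j k" using 1 by simp
qed

lemma matof_transpose: "transpose (matof ob W) = matof ob (\<lambda>j k. W k j)"
proof -
  have "(\<Sum>j\<in>UNIV. \<Sum>k\<in>UNIV. W j k * (ob k $ b) * (ob j $ a)) =
        (\<Sum>j\<in>UNIV. \<Sum>k\<in>UNIV. W k j * (ob k $ a) * (ob j $ b))" for a b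
  proof -
    have "(\<Sum>j\<in>UNIV. \<Sum>k\<in>UNIV. W j k * (ob k $ b) * (ob j $ a)) =
          (\<Sum>k\<in>UNIV. \<Sum>j\<in>UNIV. W j k * (ob k $ b) * (ob j $ a))" by (rule sum.swap)
    also have "\<dots> = (\<Sum>j\<in>UNIV. \<Sum>k\<in>UNIV. W k j * (ob k $ a) * (ob j $ b))"
      by (simp add: mult_ac)
    finally show ?thesis .
  qed
  then show ?thesis unfolding matof_def transpose_def by (simp add: vec_eq_iff)
qed

lemma matof_neg: "matof ob (\<lambda>j k. - W j k) = - matof ob W"
  unfolding matof_def by (simp add: vec_eq_iff sum_negf)

lemma transpose_add': "transpose (A + B) = transpose A + transpose (B :: real^'n^'n)"
  by (simp add: transpose_def vec_eq_iff)

lemma avoid_finite: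
  fixes B :: "real set"
  assumes "finite B" "0 < \<eta>" shows "\<exists>d. 0 < d \<and> d < \<eta> \<and> d \<notin> B"
proof -
  have "infinite ({0<..<\<eta>} - B)" using assms by (simp add: Diff_infinite_finite)
  then obtain d where "d \<in> {0<..<\<eta>} - B" by (metis ex_in_conv finite.emptyI)
  then show ?thesis by auto
qed

lemma dense_graph:
  fixes S L :: "real^'n^'n"
  assumes S: "S \<in> sym_mats" and L: "L \<in> skew_mats" and e: "e > 0"
  shows "\<exists>y\<in>graph_l. dist y (S, L) < e"
proof -
  have St: "transpose S = S" using S unfolding sym_mats_def by simp
  have Lt: "transpose L = - L" using L unfolding skew_mats_def by simp
  obtain ob where eb: "eigenbasis S ob" using spectral[OF St] by blast
  have ob: "orthonormal_basis ob" using eb unfolding eigenbasis_def by simp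
  define c where "c i = ob i \<bullet> (S *v ob i)" for i
  have c: "\<And>i. S *v ob i = c i *\<^sub>R ob i" unfolding c_def using eigenbasis_eq[OF eb] by blast
  obtain r0 :: "'n \<Rightarrow> nat" where "inj r0" using finite_imp_inj_to_nat_seg[of "UNIV::'n set"] by auto
  define r where "r i = real (r0 i)" for i
  have rinj: "r i = r j \<longleftrightarrow> i = j" for i j using \<open>inj r0\<close> unfolding r_def by (auto dest: injD)
  define M where "M = matof ob (\<lambda>j k. if j = k then r j else 0)"
  have Mt: "transpose M = M"
  proof -
    have "(\<lambda>j k. if k = j then r k else 0) = (\<lambda>j k. if j = k then r j else (0::real))" by (auto simp: fun_eq_iff)
    then show ?thesis unfolding M_def matof_transpose by simp
  qed
  have Mob: "M *v ob j = r j *\<^sub>R ob j" for j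
  proof -
    have "(\<Sum>k\<in>UNIV. (if j = k then r j else 0) *\<^sub>R ob k) = (\<Sum>k\<in>UNIV. if k = j then r j *\<^sub>R ob j else 0)"
      by (rule sum.cong) auto
    then show ?thesis unfolding M_def matof_basis(1)[OF ob] by simp
  qed
  define w where "w j k = (if r j < r k then 1 else if r k < r j then -1 else (0::real))" for j k
  define N where "N = matof ob w"
  have Nt: "transpose N = - N"
  proof -
    have "(\<lambda>j k. w k j) = (\<lambda>j k. - w j k)" unfolding w_def by (auto simp: fun_eq_iff)
    then show ?thesis unfolding N_def matof_transpose by (simp add: matof_neg)
  qed
  have Nob: "ob k \<bullet> (N *v ob j) = w j k" for j k unfolding N_def by (rule matof_basis(2)[OF ob])
  have wnz: "j \<noteq> k \<Longrightarrow> w j k \<noteq> 0" for j k using rinj[of j k] unfolding w_def by auto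
  define B1 where "B1 = (\<lambda>(i,j). (c j - c i) / (r i - r j)) ` (UNIV :: ('n \<times> 'n) set)"
  define B2 where "B2 = (\<lambda>(j,k). - (ob k \<bullet> (L *v ob j)) / w j k) ` (UNIV :: ('n \<times> 'n) set)"
  have "finite B1" unfolding B1_def by simp
  moreover have "0 < e / 2 / (norm M + 1)" using e by (simp add: add_nonneg_pos)
  ultimately obtain d1 where d1: "0 < d1" "d1 < e / 2 / (norm M + 1)" "d1 \<notin> B1"
    using avoid_finite by blast
  have "finite B2" unfolding B2_def by simp
  moreover have "0 < e / 2 / (norm N + 1)" using e by (simp add: add_nonneg_pos)
  ultimately obtain d2 where d2: "0 < d2" "d2 < e / 2 / (norm N + 1)" "d2 \<notin> B2"
    using avoid_finite by blast
  define S' where "S' = S + d1 *\<^sub>R M"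
  define L' where "L' = L + d2 *\<^sub>R N"
  define c' where "c' i = c i + d1 * r i" for i
  have S't: "transpose S' = S'" unfolding S'_def by (simp add: transpose_add' transpose_scalar St Mt)
  have c': "S' *v ob i = c' i *\<^sub>R ob i" for i
    unfolding S'_def c'_def by (simp add: matrix_vector_mult_add_rdistrib c Mob
        scaleR_matrix_vector_assoc[symmetric] scaleR_add_left)
  have "inj c'"
  proof
    fix i j assume h: "c' i = c' j"
    show "i = j"
    proof (rule ccontr)
      assume ij: "i \<noteq> j"
      then have rr: "r i - r j \<noteq> 0" using rinj by simp
      have "d1 = (c j - c i) / (r i - r j)" using h rr unfolding c'_def by (simp add: field_simps)
      then have "d1 \<in> B1" unfolding B1_def by (auto intro!: image_eqI[of _ _ "(i,j)"])
      then show False using d1 by simp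
    qed
  qed
  then have S'd: "S' \<in> sym_distinct" using distinct_iff_inj[OF S't ob c'] by simp
  have eb': "eigenbasis S' ob" unfolding eigenbasis_def using ob c' by blast
  have L'sk: "L' \<in> skew_mats" unfolding skew_mats_def L'_def
    by (simp add: transpose_add' transpose_scalar Lt Nt)
  have "L' \<notin> L_invar ob"
  proof
    assume "L' \<in> L_invar ob"
    then obtain J where J: "1 \<le> card J" "card J < CARD('n)"
      and Jc: "\<forall>j\<in>J. \<forall>k. k \<notin> J \<longrightarrow> ob k \<bullet> (L' *v ob j) = 0"
      using L_invar_iff[OF ob] by blast
    obtain j where j: "j \<in> J" using J(1) by (metis card.empty ex_in_conv not_one_le_zero)
    obtain k where k: "k \<notin> J" using J(2) by (metis UNIV_I card_mono finite subsetI not_le)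
    have jk: "j \<noteq> k" using j k by auto
    have "ob k \<bullet> (L' *v ob j) = ob k \<bullet> (L *v ob j) + d2 * w j k"
      unfolding L'_def by (simp add: matrix_vector_mult_add_rdistrib inner_add_right
          scaleR_matrix_vector_assoc[symmetric] Nob)
    then have "ob k \<bullet> (L *v ob j) + d2 * w j k = 0" using Jc j k by simp
    then have "d2 = - (ob k \<bullet> (L *v ob j)) / w j k" using wnz[OF jk] by (simp add: field_simps)
    then have "d2 \<in> B2" unfolding B2_def by (auto intro!: image_eqI[of _ _ "(j,k)"])
    then show False using d2 by simp
  qed
  then have G: "(S', L') \<in> graph_l" unfolding graph_l_def using S'd eb' L'sk by blast
  have dS: "dist S' S < e/2"
  proof -
    have "dist S' S = d1 * norm M" unfolding S'_def using d1 by (simp add: dist_norm)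
    also have "\<dots> \<le> d1 * (norm M + 1)" using d1 by simp
    also have "\<dots> < e/2"
      by (metis add_nonneg_pos norm_ge_zero zero_less_one pos_less_divide_eq d1(2))
    finally show ?thesis .
  qed
  have dL: "dist L' L < e/2"
  proof -
    have "dist L' L = d2 * norm N" unfolding L'_def using d2 by (simp add: dist_norm)
    also have "\<dots> \<le> d2 * (norm N + 1)" using d2 by simp
    also have "\<dots> < e/2"
      by (metis add_nonneg_pos norm_ge_zero zero_less_one pos_less_divide_eq d2(2))
    finally show ?thesis .
  qed
  have "dist (S', L') (S, L) \<le> \<bar>dist S' S\<bar> + \<bar>dist L' L\<bar>"
    unfolding dist_Pair_Pair by (rule sqrt_sum_squares_le_sum_abs)
  then have "dist (S', L') (S, L) < e" using dS dL by simp
  then show ?thesis using G by blast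
qed



lemma tendsto_mvmult:
  fixes A :: "'a \<Rightarrow> real^'n^'m"
  assumes "(A \<longlongrightarrow> A0) F" "(x \<longlongrightarrow> x0) F"
  shows "((\<lambda>t. A t *v x t) \<longlongrightarrow> A0 *v x0) F"
  unfolding matrix_vector_mult_def
  by (intro tendsto_intros assms)

lemma lim_freq_zero:
  fixes f :: "nat \<Rightarrow> real"
  assumes "f \<longlonglongrightarrow> a" "\<exists>\<^sub>F m in sequentially. f m = 0"
  shows "a = 0"
proof (rule ccontr)
  assume "a \<noteq> 0"
  then have "eventually (\<lambda>m. f m \<noteq> 0) sequentially" using tendsto_imp_eventually_ne[OF assms(1)] by blast
  then show False using assms(2) by (simp add: not_frequently[symmetric])
qed

lemma seq_contra:
  fixes S L :: "real^'n^'n" and y :: "nat \<Rightarrow> (real^'n^'n) \<times> (real^'n^'n)"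
  assumes Sd: "S \<in> sym_distinct" and eb0: "eigenbasis S ob0" and L0: "L \<notin> L_invar ob0"
    and Lsk: "L \<in> skew_mats"
    and yU: "\<And>m. y m \<in> sym_mats \<times> skew_mats" and yG: "\<And>m. y m \<notin> graph_l"
    and lim: "y \<longlonglongrightarrow> (S, L)"
  shows False
proof -
  have St: "transpose S = S" using Sd unfolding sym_distinct_def sym_mats_def by auto
  define Sm where "Sm m = fst (y m)" for m
  define Lm where "Lm m = snd (y m)" for m
  have ySL: "y m = (Sm m, Lm m)" for m unfolding Sm_def Lm_def by simp
  have SmL: "Sm \<longlonglongrightarrow> S" unfolding Sm_def using tendsto_fst[OF lim] by simp
  have LmL: "Lm \<longlonglongrightarrow> L" unfolding Lm_def using tendsto_snd[OF lim] by simp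
  have Smt: "transpose (Sm m) = Sm m" for m using yU[of m] unfolding Sm_def sym_mats_def by auto
  have Lmsk: "Lm m \<in> skew_mats" for m using yU[of m] unfolding Lm_def by auto
  define ob where "ob m = (SOME ob. eigenbasis (Sm m) ob)" for m
  have ebm: "eigenbasis (Sm m) (ob m)" for m
    unfolding ob_def using spectral[OF Smt[of m]] by (rule someI_ex)
  have obm: "orthonormal_basis (ob m)" for m using ebm unfolding eigenbasis_def by blast
  have om: "ob m i \<bullet> ob m j = (if i = j then 1 else 0)" for m i j
    using obm unfolding orthonormal_basis_def by blast
  define P where "P m = (\<chi> i. ob m i)" for m
  have "bounded (range P)"
  proof (rule boundedI)
    fix z assume "z \<in> range P"
    then obtain m where z: "z = P m" by auto
    have "norm z \<le> (\<Sum>i\<in>UNIV. norm (z $ i))" unfolding norm_vec_def by (rule L2_set_le_sum) simp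
    also have "\<dots> = (\<Sum>i\<in>(UNIV::'n set). 1::real)"
    proof -
      have "norm (z $ i) = 1" for i using om[of m i i] unfolding z P_def by (simp add: norm_eq_1)
      then show ?thesis by simp
    qed
    finally show "norm z \<le> real CARD('n)" by simp
  qed
  then obtain Q r where r: "strict_mono (r::nat\<Rightarrow>nat)" and PQ: "(P \<circ> r) \<longlonglongrightarrow> Q"
    using bounded_imp_convergent_subsequence by blast
  define po where "po i = Q $ i" for i
  have obl: "(\<lambda>m. ob (r m) i) \<longlonglongrightarrow> po i" for i
  proof -
    have "(\<lambda>m. (P \<circ> r) m $ i) \<longlonglongrightarrow> Q $ i" by (intro tendsto_intros PQ)
    then show ?thesis unfolding po_def P_def by simp
  qed
  have Srl: "(\<lambda>m. Sm (r m)) \<longlonglongrightarrow> S" using LIMSEQ_subseq_LIMSEQ[OF SmL r] by (simp add: o_def)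
  have Lrl: "(\<lambda>m. Lm (r m)) \<longlonglongrightarrow> L" using LIMSEQ_subseq_LIMSEQ[OF LmL r] by (simp add: o_def)
  have poo: "orthonormal_basis po" unfolding orthonormal_basis_def
  proof (intro allI)
    fix i j
    have "(\<lambda>m. ob (r m) i \<bullet> ob (r m) j) \<longlonglongrightarrow> po i \<bullet> po j" by (intro tendsto_intros obl)
    moreover have "(\<lambda>m. ob (r m) i \<bullet> ob (r m) j) = (\<lambda>m. if i = j then 1 else 0)" using om by simp
    ultimately show "po i \<bullet> po j = (if i = j then 1 else 0)" using LIMSEQ_unique tendsto_const by metis
  qed
  define c where "c m i = ob (r m) i \<bullet> (Sm (r m) *v ob (r m) i)" for m i
  define mu where "mu i = po i \<bullet> (S *v po i)" for i
  have cl: "(\<lambda>m. c m i) \<longlonglongrightarrow> mu i" for i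
    unfolding c_def mu_def by (intro tendsto_intros tendsto_mvmult obl Srl)
  have mu: "S *v po i = mu i *\<^sub>R po i" for i
  proof -
    have "(\<lambda>m. Sm (r m) *v ob (r m) i) \<longlonglongrightarrow> S *v po i" by (intro tendsto_mvmult obl Srl)
    moreover have "(\<lambda>m. c m i *\<^sub>R ob (r m) i) \<longlonglongrightarrow> mu i *\<^sub>R po i" by (intro tendsto_intros cl obl)
    moreover have "(\<lambda>m. Sm (r m) *v ob (r m) i) = (\<lambda>m. c m i *\<^sub>R ob (r m) i)"
      unfolding c_def using eigenbasis_eq[OF ebm] by blast
    ultimately show ?thesis using LIMSEQ_unique by metis
  qed
  have ebpo: "eigenbasis S po" unfolding eigenbasis_def using poo mu by blast
  have injmu: "inj mu" using distinct_iff_inj[OF St poo mu] Sd by simp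
  have "eventually (\<lambda>m. fst p \<noteq> snd p \<longrightarrow> c m (fst p) \<noteq> c m (snd p)) sequentially" for p :: "'n \<times> 'n"
  proof (cases "fst p = snd p")
    case True then show ?thesis by simp
  next
    case False
    then have "mu (fst p) - mu (snd p) \<noteq> 0" using injmu by (auto dest: injD)
    moreover have "(\<lambda>m. c m (fst p) - c m (snd p)) \<longlonglongrightarrow> mu (fst p) - mu (snd p)" by (intro tendsto_intros cl)
    ultimately have "eventually (\<lambda>m. c m (fst p) - c m (snd p) \<noteq> 0) sequentially"
      using tendsto_imp_eventually_ne by blast
    then show ?thesis by (rule eventually_mono) simp
  qed
  then have "eventually (\<lambda>m. \<forall>p::'n\<times>'n. fst p \<noteq> snd p \<longrightarrow> c m (fst p) \<noteq> c m (snd p)) sequentially"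
    by (rule eventually_all_finite)
  then have evinj: "eventually (\<lambda>m. inj (c m)) sequentially"
    by (rule eventually_mono) (auto simp: inj_def)
  have ceq: "Sm (r m) *v ob (r m) i = c m i *\<^sub>R ob (r m) i" for m i
    unfolding c_def using eigenbasis_eq[OF ebm] by blast
  have evQ: "eventually (\<lambda>m. \<exists>J::'n set. 1 \<le> card J \<and> card J < CARD('n) \<and>
       (\<forall>j\<in>J. \<forall>k. k \<notin> J \<longrightarrow> ob (r m) k \<bullet> (Lm (r m) *v ob (r m) j) = 0)) sequentially"
    using evinj
  proof (rule eventually_mono)
    fix m assume "inj (c m)"
    then have "Sm (r m) \<in> sym_distinct" using distinct_iff_inj[OF Smt obm ceq] by simp
    then have "Lm (r m) \<in> L_invar (ob (r m))"
      using yG[of "r m"] ebm[of "r m"] Lmsk[of "r m"] unfolding ySL graph_l_def by blast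
    then show "\<exists>J::'n set. 1 \<le> card J \<and> card J < CARD('n) \<and>
       (\<forall>j\<in>J. \<forall>k. k \<notin> J \<longrightarrow> ob (r m) k \<bullet> (Lm (r m) *v ob (r m) j) = 0)"
      using L_invar_iff[OF obm] by blast
  qed
  obtain J :: "'n set" where J: "\<exists>\<^sub>F m in sequentially. 1 \<le> card J \<and> card J < CARD('n) \<and>
       (\<forall>j\<in>J. \<forall>k. k \<notin> J \<longrightarrow> ob (r m) k \<bullet> (Lm (r m) *v ob (r m) j) = 0)"
  proof (rule ccontr)
    assume "\<not> thesis"
    then have "\<forall>J::'n set. \<not> (\<exists>\<^sub>F m in sequentially. 1 \<le> card J \<and> card J < CARD('n) \<and>
       (\<forall>j\<in>J. \<forall>k. k \<notin> J \<longrightarrow> ob (r m) k \<bullet> (Lm (r m) *v ob (r m) j) = 0))" using that by blast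
    then have "\<And>J::'n set. eventually (\<lambda>m. \<not> (1 \<le> card J \<and> card J < CARD('n) \<and>
       (\<forall>j\<in>J. \<forall>k. k \<notin> J \<longrightarrow> ob (r m) k \<bullet> (Lm (r m) *v ob (r m) j) = 0))) sequentially"
      by (simp only: not_frequently)
    then have "eventually (\<lambda>m. \<forall>J::'n set. \<not> (1 \<le> card J \<and> card J < CARD('n) \<and>
       (\<forall>j\<in>J. \<forall>k. k \<notin> J \<longrightarrow> ob (r m) k \<bullet> (Lm (r m) *v ob (r m) j) = 0))) sequentially"
      by (rule eventually_all_finite)
    then have "eventually (\<lambda>m. False) sequentially" using evQ
      by (rule eventually_elim2) blast
    then show False by (simp add: eventually_False_sequentially)
  qed
  have Jc: "1 \<le> card J" "card J < CARD('n)"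
    using J by (auto dest: frequently_ex)
  have "po k \<bullet> (L *v po j) = 0" if j: "j \<in> J" and k: "k \<notin> J" for j k
  proof (rule lim_freq_zero)
    show "(\<lambda>m. ob (r m) k \<bullet> (Lm (r m) *v ob (r m) j)) \<longlonglongrightarrow> po k \<bullet> (L *v po j)"
      by (intro tendsto_intros tendsto_mvmult obl Lrl)
    show "\<exists>\<^sub>F m in sequentially. ob (r m) k \<bullet> (Lm (r m) *v ob (r m) j) = 0"
      using J by (rule frequently_elim1) (use j k in blast)
  qed
  then have "L \<in> L_invar po" using L_invar_iff[OF poo] Lsk Jc by blast
  then have "L \<in> L_invar ob0" using transfer_invar[OF Sd ebpo eb0] by blast
  then show False using L0 by simp
qed



theorem lemma5p2:
  assumes "CARD('n) \<ge> 2"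
  shows "openin (top_of_set (sym_mats \<times> skew_mats)) (graph_l :: ((real^'n^'n) \<times> (real^'n^'n)) set)
     \<and> sym_mats \<times> skew_mats \<subseteq> closure (graph_l :: ((real^'n^'n) \<times> (real^'n^'n)) set)"
proof
  let ?U = "sym_mats \<times> skew_mats :: ((real^'n^'n) \<times> (real^'n^'n)) set"
  let ?G = "graph_l :: ((real^'n^'n) \<times> (real^'n^'n)) set"
  have sub: "?G \<subseteq> ?U" unfolding graph_l_def sym_distinct_def by auto
  show "openin (top_of_set ?U) ?G"
    unfolding openin_euclidean_subtopology_iff
  proof (intro conjI sub ballI)
    fix x assume xG: "x \<in> ?G"
    obtain S L where x: "x = (S, L)" by fastforce
    obtain ob0 where Sd: "S \<in> sym_distinct" and eb0: "eigenbasis S ob0" and Lsk: "L \<in> skew_mats"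
      and L0: "L \<notin> L_invar ob0" using xG unfolding x graph_l_def by blast
    show "\<exists>e>0. \<forall>x'\<in>?U. dist x' x < e \<longrightarrow> x' \<in> ?G"
    proof (rule ccontr)
      assume "\<not> ?thesis"
      then have "\<forall>m::nat. \<exists>x'. x' \<in> ?U \<and> dist x' x < 1 / real (Suc m) \<and> x' \<notin> ?G"
        by (metis of_nat_0_less_iff zero_less_Suc zero_less_divide_1_iff)
      then obtain y where y: "\<And>m. y m \<in> ?U" "\<And>m. dist (y m) x < 1 / real (Suc m)" "\<And>m. y m \<notin> ?G"
        by metis
      have "y \<longlonglongrightarrow> x"
        unfolding lim_sequentially
      proof (intro allI impI)
        fix e :: real assume e: "e > 0"
        obtain N :: nat where N: "inverse (real (Suc N)) < e" using reals_Archimedean[OF e] by blast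
        have "dist (y m) x < e" if "m \<ge> N" for m
        proof -
          have "1 / real (Suc m) \<le> 1 / real (Suc N)" using that by (simp add: frac_le)
          then show ?thesis using y(2)[of m] N by (simp add: inverse_eq_divide)
        qed
        then show "\<exists>N. \<forall>m\<ge>N. dist (y m) x < e" by blast
      qed
      then show False using seq_contra[OF Sd eb0 L0 Lsk y(1) y(3)] x by simp
    qed
  qed
  show "?U \<subseteq> closure ?G"
  proof
    fix z assume z: "z \<in> ?U"
    obtain S L where zz: "z = (S, L)" by fastforce
    show "z \<in> closure ?G" unfolding closure_approachable zz
      using dense_graph z zz by blast
  qed
qed

end
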